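(* Let $N$ be a positive integer and define polynomials $P_n(x),Q_n(x)$ ($n\ge0$) by $P_0=1$, $P_1=(N+1)-x$, $Q_0=1$, $Q_1=N+1$, and for $n\ge2$ $$P_n=a_nP_{n-1}+b_nP_{n-2},\qquad Q_n=a_nQ_{n-1}+b_nQ_{n-2},$$ where $a_n=N+n$, $b_{2m}=mx$ and $b_{2m+1}=-(N+m)x$ for $m\ge1$. Then for every $n\ge1$: $$P_{2n-1}(x)=\sum_{j=0}^{n}(-1)^j\binom{n}{j}\prod_{l=1}^{2n-j-1}(N+l)\cdot x^j,\qquad P_{2n}(x)=\sum_{j=0}^{n}(-1)^j\binom{n}{j}\prod_{l=1}^{2n-j}(N+l)\cdot x^j,$$ $$Q_{2n-1}(x)=\sum_{j=0}^{n-1}\sum_{k=0}^{j}(-1)^{j-k}(2n-j-1)_k\binom{n-k-1}{j-k}\prod_{l=k+1}^{2n-j-1}(N+l)\cdot x^j,$$ $$Q_{2n}(x)=\sum_{j=0}^{n}\sum_{k=0}^{j}(-1)^{j-k}(2n-j)_k\binom{n-k-1}{j-k}\prod_{l=k+1}^{2n-j}(N+l)\cdot x^j.$$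
   Context: $(y)_k=y(y-1)\cdots(y-k+1)$ denotes the falling factorial, $(y)_0=1$. Conventions: $\binom{a}{k}=0$ for integers $0\le a<k$, $\binom{-1}{0}=1$, and an empty product equals $1$. The quotients $P_n(x)/Q_n(x)$ are the convergents of the continued fraction expansion $\frac{x^N/N!}{e^x-\sum_{i=0}^{N-1}x^i/i!}=1-\cfrac{x}{N+1+\cfrac{x}{N+2-\cfrac{(N+1)x}{N+3+\cfrac{2x}{N+4-\cdots}}}}$. *)

theory Defs
  imports Complex_Main "HOL-Computational_Algebra.Polynomial"
begin

definition falling_fact :: "real \<Rightarrow> nat \<Rightarrow> real" where
  "falling_fact y k = (\<Prod>i<k. (y - of_nat i))"

definition acoef :: "nat \<Rightarrow> nat \<Rightarrow> real poly" where
  "acoef N n = [: of_nat N + of_nat n :]"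

definition bcoef :: "nat \<Rightarrow> nat \<Rightarrow> real poly" where
  "bcoef N n = (if even n then [: 0, of_nat (n div 2) :]
                else [: 0, - (of_nat N + of_nat (n div 2)) :])"

fun Ppol :: "nat \<Rightarrow> nat \<Rightarrow> real poly" where
  "Ppol N 0 = 1"
| "Ppol N (Suc 0) = [: of_nat N + 1, -1 :]"
| "Ppol N (Suc (Suc n)) =
     acoef N (Suc (Suc n)) * Ppol N (Suc n) + bcoef N (Suc (Suc n)) * Ppol N n"

fun Qpol :: "nat \<Rightarrow> nat \<Rightarrow> real poly" where
  "Qpol N 0 = 1"
| "Qpol N (Suc 0) = [: of_nat N + 1 :]"
| "Qpol N (Suc (Suc n)) =
     acoef N (Suc (Suc n)) * Qpol N (Suc n) + bcoef N (Suc (Suc n)) * Qpol N n"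

end

theory Submission
  imports Defs
begin


definition FF :: "nat \<Rightarrow> nat \<Rightarrow> real" where
  "FF N m = (\<Prod>l=1..m. (of_nat N + of_nat l))"

definition qterm :: "nat \<Rightarrow> nat \<Rightarrow> nat \<Rightarrow> nat \<Rightarrow> real" where
  "qterm N m i k = (-1)^(i-k) * falling_fact (of_nat (m-i)) k
     * (of_int (int ((m+1) div 2) - int k - 1) gchoose (i-k)) * (FF N (m-i) / FF N k)"

lemma FF_0[simp]: "FF N 0 = 1" by (simp add: FF_def)
lemma FF_Suc: "FF N (Suc m) = FF N m * (of_nat N + of_nat (Suc m))"
  by (simp add: FF_def prod.cl_ivl_Suc)
lemma FF_pos: "FF N m > 0"
  unfolding FF_def by (rule prod_pos) auto
lemma FF_nz[simp]: "FF N m \<noteq> 0" using FF_pos[of N m] by simp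

lemma ff_0[simp]: "falling_fact x 0 = 1" by (simp add: falling_fact_def)
lemma ff_Suc: "falling_fact x (Suc k) = falling_fact x k * (x - of_nat k)"
  by (simp add: falling_fact_def)
lemma ff_shift: "falling_fact (x+1) (Suc k) = (x+1) * falling_fact x k"
  by (induction k) (auto simp: ff_Suc algebra_simps)
lemma ff_zero: "p < k \<Longrightarrow> falling_fact (of_nat p) k = 0"
  unfolding falling_fact_def by (rule prod_zero) auto
lemma ff_rel: "falling_fact (x+1) k * (x + 1 - of_nat k) = (x+1) * falling_fact x k"
  by (metis ff_shift ff_Suc)
lemma ff_diff: "falling_fact (x+1) (Suc k) - falling_fact x (Suc k) = (of_nat k + 1) * falling_fact x k"
  by (simp only: ff_shift ff_Suc[of x k]) (simp add: algebra_simps)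

lemma ptD:
 fixes a b GA0 GA1 H H1 s x kk N t d A :: real
 assumes "b*(x-kk) = x*a" "(d+1)*GA1 = (A-d)*GA0" "H1*(N+kk+1) = H"
   "x = 2*t + 2 - kk - d" "A = t - kk"
 shows "(-s) * b * (GA0 + GA1) * (H*(N+x)) - (N+2*t+3) * ((-s)*a*GA1*H) - (-(N+t+1))*(s*a*GA0*H) = (-s)*(b - a)*(GA0 + GA1)*(N+kk)*H - s*((kk+1)*a)*GA0*(N+kk+1)*H1"
  using assms by algebra

lemma concD:
  fixes N t i i' k :: nat
  assumes "i = Suc i'" "i \<le> t+1" "k \<le> i'"
  defines "W \<equiv> \<lambda>k. (-1)^(i-k) * (falling_fact (of_nat (2*t+3-i)) k - falling_fact (of_nat (2*t+2-i)) k)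
      * (of_int (int (t+1) - int k) gchoose (i-k)) * (of_nat N + of_nat k) * (FF N (2*t+2-i) / FF N k)"
  shows "qterm N (2*t+3) i k - (of_nat N + of_nat (2*t+3)) * qterm N (2*t+2) i k
     - (- (of_nat N + of_nat (t+1))) * qterm N (2*t+1) i' k = W k - W (Suc k)"
proof -
  obtain d where d: "i' = k + d" using assms(3) le_Suc_ex by blast
  define y where "y = real (2*t+2-i)"
  define x where "x = y + 1"
  define a where "a = falling_fact y k"
  define b where "b = falling_fact x k"
  define A where "A = real t - real k"
  define GA0 where "GA0 = (of_int (int t - int k) gchoose d :: real)"
  define GA1 where "GA1 = (of_int (int t - int k) gchoose (Suc d) :: real)"
  define H where "H = FF N (2*t+2-i) / FF N k"
  define H1 where "H1 = FF N (2*t+2-i) / FF N (Suc k)"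
  define s where "s = ((-1::real)^d)"
  have ik: "i - k = Suc d" "i' - k = d" "i - Suc k = d" using assms(1) d by auto
  have xM: "real (2*t+3-i) = x" unfolding x_def y_def using assms by auto
  have M1: "2*t+1-i' = 2*t+2-i" using assms by auto
  have M2: "2*t+3-i = Suc (2*t+2-i)" using assms by auto
  have r1: "b*(x - real k) = x*a" unfolding a_def b_def x_def using ff_rel[of y k] by (simp add: algebra_simps)
  have r2: "(real d+1)*GA1 = (A - real d)*GA0"
    unfolding GA0_def GA1_def A_def using gbinomial_mult_1[of "of_int (int t - int k) :: real" d] by (simp add: algebra_simps)
  have nz: "real N + real k + 1 \<noteq> 0" by simp
  have "H1 = H / (real N + real k + 1)" unfolding H_def H1_def FF_Suc
    by (simp add: divide_divide_eq_left add.commute add.left_commute)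
  hence r3: "H1*(real N + real k+1) = H" using nz by simp
  have xe: "x = 2*real t + 2 - real k - real d" unfolding x_def y_def using assms d by auto
  have gL: "(of_int (int ((2*t+3+1) div 2) - int k - 1) gchoose (i-k) :: real) = GA0 + GA1"
  proof -
    have "(2*t+3+1) div 2 = t+2" by simp
    hence e: "(of_int (int ((2*t+3+1) div 2) - int k - 1) :: real) = of_int (int t - int k) + 1" by simp
    show ?thesis by (simp only: ik e GA0_def GA1_def gbinomial_Suc_Suc)
  qed
  have gR1: "(of_int (int ((2*t+2+1) div 2) - int k - 1) gchoose (i-k) :: real) = GA1"
    unfolding ik GA1_def by simp
  have gR2: "(of_int (int ((2*t+1+1) div 2) - int k - 1) gchoose (i'-k) :: real) = GA0"
    unfolding ik GA0_def by simp
  have gW0: "(of_int (int (t+1) - int k) gchoose (i-k) :: real) = GA0 + GA1"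
  proof -
    have e: "(of_int (int (t+1) - int k) :: real) = of_int (int t - int k) + 1" by simp
    show ?thesis by (simp only: ik e GA0_def GA1_def gbinomial_Suc_Suc)
  qed
  have gW1: "(of_int (int (t+1) - int (Suc k)) gchoose (i - Suc k) :: real) = GA0"
    unfolding ik GA0_def by simp
  have L: "qterm N (2*t+3) i k = (-s) * b * (GA0 + GA1) * (H*(real N+x))"
    unfolding qterm_def gL xM unfolding ik s_def b_def H_def M2 FF_Suc
    using M2 xM by (simp add: field_simps)
  have R1: "qterm N (2*t+2) i k = (-s) * a * GA1 * H"
    unfolding qterm_def gR1 unfolding ik s_def a_def H_def y_def by simp
  have R2: "qterm N (2*t+1) i' k = s * a * GA0 * H"
    unfolding qterm_def gR2 M1 unfolding ik s_def a_def H_def y_def by simp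
  have Wk: "W k = (-s)*(b-a)*(GA0+GA1)*(real N+real k)*H"
    unfolding W_def gW0 xM unfolding ik s_def a_def b_def H_def y_def by simp
  have Wk1: "W (Suc k) = s*((real k+1)*a)*GA0*(real N+real k+1)*H1"
    unfolding W_def gW1 xM unfolding ik s_def a_def x_def H1_def y_def[symmetric] ff_diff
    by simp
  show ?thesis unfolding L R1 R2 Wk Wk1
    using ptD[OF r1 r2 r3 xe A_def, where s=s] by (simp add: algebra_simps)
qed
lemma ptC:
 fixes a b GA0 GA1 H H1 s x kk N t d A :: real
 assumes "b*(x-kk) = x*a" "(d+1)*GA1 = A*GA0" "H1*(N+kk+1) = H"
   "x = 2*t + 1 - kk - d" "A = t - kk"
 shows "(-s) * b * GA1 * (H*(N+x)) - (N+2*t+2) * ((-s)*a*GA1*H) - (t+1)*(s*a*GA0*H) = (-s)*(b - a)*GA1*(N+kk)*H - s*((kk+1)*a)*GA0*(N+kk+1)*H1"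
  using assms by algebra

lemma concC:
  fixes N t i i' k :: nat
  assumes "i = Suc i'" "i \<le> t+1" "k \<le> i'"
  defines "W \<equiv> \<lambda>k. (-1)^(i-k) * (falling_fact (of_nat (2*t+2-i)) k - falling_fact (of_nat (2*t+1-i)) k)
      * (of_int (int (t+1) - int k - 1) gchoose (i-k)) * (of_nat N + of_nat k) * (FF N (2*t+1-i) / FF N k)"
  shows "qterm N (2*t+2) i k - (of_nat N + of_nat (2*t+2)) * qterm N (2*t+1) i k
     - of_nat (t+1) * qterm N (2*t) i' k = W k - W (Suc k)"
proof -
  obtain d where d: "i' = k + d" using assms(3) le_Suc_ex by blast
  define y where "y = real (2*t+1-i)"
  define x where "x = y + 1"
  define a where "a = falling_fact y k"
  define b where "b = falling_fact x k"
  define A where "A = real t - real k"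
  define GA0 where "GA0 = ((of_int (int t - int k) - 1) gchoose d :: real)"
  define GA1 where "GA1 = (of_int (int t - int k) gchoose (Suc d) :: real)"
  define H where "H = FF N (2*t+1-i) / FF N k"
  define H1 where "H1 = FF N (2*t+1-i) / FF N (Suc k)"
  define s where "s = ((-1::real)^d)"
  have ik: "i - k = Suc d" "i' - k = d" "i - Suc k = d" using assms(1) d by auto
  have xM: "real (2*t+2-i) = x" unfolding x_def y_def using assms by auto
  have M1: "2*t-i' = 2*t+1-i" using assms by auto
  have M2: "2*t+2-i = Suc (2*t+1-i)" using assms by auto
  have r1: "b*(x - real k) = x*a" unfolding a_def b_def x_def using ff_rel[of y k] by (simp add: algebra_simps)
  have r2: "(real d+1)*GA1 = A*GA0"
    unfolding GA0_def GA1_def A_def using gbinomial_absorption[of d "of_int (int t - int k) :: real"] by (simp add: algebra_simps)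
  have nz: "real N + real k + 1 \<noteq> 0" by simp
  have "H1 = H / (real N + real k + 1)" unfolding H_def H1_def FF_Suc
    by (simp add: divide_divide_eq_left add.commute add.left_commute)
  hence r3: "H1*(real N + real k+1) = H" using nz by simp
  have xe: "x = 2*real t + 1 - real k - real d" unfolding x_def y_def using assms d by auto
  have gL: "(of_int (int ((2*t+2+1) div 2) - int k - 1) gchoose (i-k) :: real) = GA1"
  proof -
    have "(2*t+2+1) div 2 = t+1" by simp
    hence e: "(of_int (int ((2*t+2+1) div 2) - int k - 1) :: real) = of_int (int t - int k)" by simp
    show ?thesis by (simp only: ik e GA1_def)
  qed
  have gR1: "(of_int (int ((2*t+1+1) div 2) - int k - 1) gchoose (i-k) :: real) = GA1"
    unfolding ik GA1_def by simp
  have gR2: "(of_int (int ((2*t+1) div 2) - int k - 1) gchoose (i'-k) :: real) = GA0"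
  proof -
    have "(2*t+1) div 2 = t" by simp
    hence e: "(of_int (int ((2*t+1) div 2) - int k - 1) :: real) = of_int (int t - int k) - 1" by simp
    show ?thesis by (simp only: ik e GA0_def)
  qed
  have gW0: "(of_int (int (t+1) - int k - 1) gchoose (i-k) :: real) = GA1"
  proof -
    have e: "(of_int (int (t+1) - int k - 1) :: real) = of_int (int t - int k)" by simp
    show ?thesis by (simp only: ik e GA1_def)
  qed
  have gW1: "(of_int (int (t+1) - int (Suc k) - 1) gchoose (i - Suc k) :: real) = GA0"
  proof -
    have e: "(of_int (int (t+1) - int (Suc k) - 1) :: real) = of_int (int t - int k) - 1" by simp
    show ?thesis by (simp only: ik e GA0_def)
  qed
  have L: "qterm N (2*t+2) i k = (-s) * b * GA1 * (H*(real N+x))"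
    unfolding qterm_def gL xM unfolding ik s_def b_def H_def M2 FF_Suc
    using M2 xM by (simp add: field_simps)
  have R1: "qterm N (2*t+1) i k = (-s) * a * GA1 * H"
    unfolding qterm_def gR1 unfolding ik s_def a_def H_def y_def by simp
  have R2: "qterm N (2*t) i' k = s * a * GA0 * H"
    unfolding qterm_def gR2 M1 unfolding ik s_def a_def H_def y_def by simp
  have Wk: "W k = (-s)*(b-a)*GA1*(real N+real k)*H"
    unfolding W_def gW0 xM unfolding ik s_def a_def b_def H_def y_def by simp
  have Wk1: "W (Suc k) = s*((real k+1)*a)*GA0*(real N+real k+1)*H1"
    unfolding W_def gW1 xM unfolding ik s_def a_def x_def H1_def y_def[symmetric] ff_diff
    by simp
  show ?thesis unfolding L R1 R2 Wk Wk1
    using ptC[OF r1 r2 r3 xe A_def, where s=s] by (simp add: algebra_simps)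
qed

lemma endD:
  fixes N t i :: nat
  assumes "i \<le> t+1"
  shows "qterm N (2*t+3) i i - (of_nat N + of_nat (2*t+3)) * qterm N (2*t+2) i i =
    (-1)^(i-i) * (falling_fact (of_nat (2*t+3-i)) i - falling_fact (of_nat (2*t+2-i)) i)
      * (of_int (int (t+1) - int i) gchoose (i-i)) * (of_nat N + of_nat i) * (FF N (2*t+2-i) / FF N i)"
proof -
  define y where "y = real (2*t+2-i)"
  define x where "x = y + 1"
  define a where "a = falling_fact y i"
  define b where "b = falling_fact x i"
  define H where "H = FF N (2*t+2-i) / FF N i"
  have xM: "real (2*t+3-i) = x" unfolding x_def y_def using assms by auto
  have M2: "2*t+3-i = Suc (2*t+2-i)" using assms by auto
  have r1: "b*(x - real i) = x*a" unfolding a_def b_def x_def using ff_rel[of y i] by (simp add: algebra_simps)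
  have xe: "x = 2*real t + 3 - real i" unfolding x_def y_def using assms by auto
  have L: "qterm N (2*t+3) i i = b * (H*(real N+x))"
    unfolding qterm_def xM unfolding b_def H_def M2 FF_Suc
    using M2 xM by (simp add: field_simps)
  have R1: "qterm N (2*t+2) i i = a * H"
    unfolding qterm_def unfolding a_def H_def y_def by simp
  have e2: "real (2*t+3) = 2*real t + 3" by simp
  have W: "(-1)^(i-i) * (falling_fact (of_nat (2*t+3-i)) i - falling_fact y i) * (of_int (int (t+1) - int i) gchoose (i-i))
      * (of_nat N + of_nat i) * H = (b-a)*(of_nat N + of_nat i)*H"
    unfolding xM by (simp add: a_def b_def)
  show ?thesis unfolding L R1 H_def[symmetric] y_def[symmetric] W using r1 xe e2 by algebra
qed

lemma endC:
  fixes N t i :: nat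
  assumes "i \<le> t+1"
  shows "qterm N (2*t+2) i i - (of_nat N + of_nat (2*t+2)) * qterm N (2*t+1) i i =
    (-1)^(i-i) * (falling_fact (of_nat (2*t+2-i)) i - falling_fact (of_nat (2*t+1-i)) i)
      * (of_int (int (t+1) - int i - 1) gchoose (i-i)) * (of_nat N + of_nat i) * (FF N (2*t+1-i) / FF N i)"
proof -
  define y where "y = real (2*t+1-i)"
  define x where "x = y + 1"
  define a where "a = falling_fact y i"
  define b where "b = falling_fact x i"
  define H where "H = FF N (2*t+1-i) / FF N i"
  have xM: "real (2*t+2-i) = x" unfolding x_def y_def using assms by auto
  have M2: "2*t+2-i = Suc (2*t+1-i)" using assms by auto
  have r1: "b*(x - real i) = x*a" unfolding a_def b_def x_def using ff_rel[of y i] by (simp add: algebra_simps)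
  have xe: "x = 2*real t + 2 - real i" unfolding x_def y_def using assms by auto
  have L: "qterm N (2*t+2) i i = b * (H*(real N+x))"
    unfolding qterm_def xM unfolding b_def H_def M2 FF_Suc
    using M2 xM by (simp add: field_simps)
  have R1: "qterm N (2*t+1) i i = a * H"
    unfolding qterm_def unfolding a_def H_def y_def by simp
  have e2: "real (2*t+2) = 2*real t + 2" by simp
  have W: "(-1)^(i-i) * (falling_fact (of_nat (2*t+2-i)) i - falling_fact y i) * (of_int (int (t+1) - int i - 1) gchoose (i-i))
      * (of_nat N + of_nat i) * H = (b-a)*(of_nat N + of_nat i)*H"
    unfolding xM by (simp add: a_def b_def)
  show ?thesis unfolding L R1 H_def[symmetric] y_def[symmetric] W using r1 xe e2 by algebra
qed

lemma telesc_aux: "(\<Sum>k=0..n. W k - W (Suc k)) = (W 0 - W (Suc n) :: real)"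
  by (induction n) auto

lemma telesc:
  fixes L R1 R2 W :: "nat \<Rightarrow> real"
  assumes "\<And>k. k \<le> i' \<Longrightarrow> L k - c1*R1 k - c2*R2 k = W k - W (Suc k)"
    "L (Suc i') - c1*R1 (Suc i') = W (Suc i')" "W 0 = 0"
  shows "(\<Sum>k=0..Suc i'. L k) = c1*(\<Sum>k=0..Suc i'. R1 k) + c2*(\<Sum>k=0..i'. R2 k)"
proof -
  have "(\<Sum>k=0..i'. L k - c1*R1 k - c2*R2 k) = (\<Sum>k=0..i'. W k - W (Suc k))"
    using assms(1) by (intro sum.cong) auto
  also have "\<dots> = W 0 - W (Suc i')" by (rule telesc_aux)
  finally have e: "(\<Sum>k=0..i'. L k) - c1*(\<Sum>k=0..i'. R1 k) - c2*(\<Sum>k=0..i'. R2 k) = - W (Suc i')"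
    using assms(3) by (simp add: sum_subtractf sum_distrib_left)
  show ?thesis using e assms(2) by (simp add: algebra_simps)
qed

definition qc :: "nat \<Rightarrow> nat \<Rightarrow> nat \<Rightarrow> real" where
  "qc N m i = (if i \<le> m div 2 then (\<Sum>k=0..i. qterm N m i k) else 0)"

lemma qterm_vanish:
  assumes "m \<ge> 1" "i > m div 2" "k \<le> i"
  shows "qterm N m i k = 0"
proof (cases "k < (m+1) div 2")
  case True
  define c where "c = (m+1) div 2 - k - 1"
  have e: "(of_int (int ((m+1) div 2) - int k - 1) :: real) = of_nat c"
    unfolding c_def using True by (simp add: of_nat_diff)
  have "c < i - k" unfolding c_def using True assms by auto
  hence "(of_nat c gchoose (i-k) :: real) = 0"
    by (simp add: binomial_gbinomial[symmetric])
  thus ?thesis unfolding qterm_def e by simp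
next
  case False
  have "m - i < k" using False assms by auto
  thus ?thesis unfolding qterm_def using ff_zero[of "m-i" k] by simp
qed

lemma qsum_vanish:
  assumes "m \<ge> 1" "i > m div 2"
  shows "(\<Sum>k=0..i. qterm N m i k) = 0"
  using qterm_vanish[OF assms] by simp

lemma coeff_cmult: "coeff ([:c:] * p) i = c * coeff p i" by simp
lemma coeff_xmult: "coeff ([:0, c:] * p) i = (if i = 0 then 0 else c * coeff p (i - 1))"
  by (cases i) simp_all

lemma coeff_rec:
  "coeff (acoef N (Suc (Suc m)) * p + bcoef N (Suc (Suc m)) * q) i =
     (of_nat N + of_nat (Suc (Suc m))) * coeff p i +
     (if i = 0 then 0 else (if even m then of_nat (Suc (Suc m) div 2) else - (of_nat N + of_nat (Suc (Suc m) div 2))) * coeff q (i - 1))"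
  unfolding acoef_def bcoef_def by (cases i) auto

lemma qterm_00: "qterm N m 0 0 = FF N m"
  by (simp add: qterm_def)

lemma qc_recD:
  fixes N t i :: nat
  shows "qc N (2*t+3) i = (of_nat N + of_nat (2*t+3)) * qc N (2*t+2) i +
     (if i = 0 then 0 else (- (of_nat N + of_nat (t+1))) * qc N (2*t+1) (i-1))"
proof (cases i)
  case 0
  have e: "Suc (2*t+2) = 2*t+3" by simp
  have "FF N (2*t+3) = FF N (2*t+2) * (of_nat N + of_nat (2*t+3))"
    using FF_Suc[of N "2*t+2"] unfolding e .
  thus ?thesis using 0 by (simp add: qc_def qterm_00)
next
  case (Suc i')
  show ?thesis
  proof (cases "i \<le> t+1")
    case False
    thus ?thesis using Suc by (simp add: qc_def)
  next
    case True
    define W where "W \<equiv> \<lambda>k. (-1)^(i-k) * (falling_fact (of_nat (2*t+3-i)) k - falling_fact (of_nat (2*t+2-i)) k)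
      * (of_int (int (t+1) - int k) gchoose (i-k)) * (of_nat N + of_nat k) * (FF N (2*t+2-i) / FF N k)"
    have T: "(\<Sum>k=0..Suc i'. qterm N (2*t+3) i k) =
      (of_nat N + of_nat (2*t+3)) * (\<Sum>k=0..Suc i'. qterm N (2*t+2) i k)
      + (- (of_nat N + of_nat (t+1))) * (\<Sum>k=0..i'. qterm N (2*t+1) i' k)"
    proof (rule telesc[where W=W])
      fix k assume "k \<le> i'"
      thus "qterm N (2*t+3) i k - (of_nat N + of_nat (2*t+3)) * qterm N (2*t+2) i k
        - (- (of_nat N + of_nat (t+1))) * qterm N (2*t+1) i' k = W k - W (Suc k)"
        using concD[OF Suc True] unfolding W_def by blast
    next
      show "qterm N (2*t+3) i (Suc i') - (of_nat N + of_nat (2*t+3)) * qterm N (2*t+2) i (Suc i') = W (Suc i')"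
        using endD[OF True, of N] unfolding W_def Suc by simp
    next
      show "W 0 = 0" unfolding W_def by simp
    qed
    have d1: "i \<le> (2*t+3) div 2" "i \<le> (2*t+2) div 2" "i' \<le> (2*t+1) div 2" using True Suc by auto
    show ?thesis using T d1 Suc by (simp add: qc_def)
  qed
qed

lemma qc_recC:
  fixes N t i :: nat
  shows "qc N (2*t+2) i = (of_nat N + of_nat (2*t+2)) * qc N (2*t+1) i +
     (if i = 0 then 0 else of_nat (t+1) * qc N (2*t) (i-1))"
proof (cases i)
  case 0
  have e: "Suc (2*t+1) = 2*t+2" by simp
  have "FF N (2*t+2) = FF N (2*t+1) * (of_nat N + of_nat (2*t+2))"
    using FF_Suc[of N "2*t+1"] unfolding e .
  thus ?thesis using 0 by (simp add: qc_def qterm_00)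
next
  case (Suc i')
  show ?thesis
  proof (cases "i \<le> t+1")
    case False
    thus ?thesis using Suc by (simp add: qc_def)
  next
    case True
    define W where "W \<equiv> \<lambda>k. (-1)^(i-k) * (falling_fact (of_nat (2*t+2-i)) k - falling_fact (of_nat (2*t+1-i)) k)
      * (of_int (int (t+1) - int k - 1) gchoose (i-k)) * (of_nat N + of_nat k) * (FF N (2*t+1-i) / FF N k)"
    have T: "(\<Sum>k=0..Suc i'. qterm N (2*t+2) i k) =
      (of_nat N + of_nat (2*t+2)) * (\<Sum>k=0..Suc i'. qterm N (2*t+1) i k)
      + of_nat (t+1) * (\<Sum>k=0..i'. qterm N (2*t) i' k)"
    proof (rule telesc[where W=W])
      fix k assume "k \<le> i'"
      thus "qterm N (2*t+2) i k - (of_nat N + of_nat (2*t+2)) * qterm N (2*t+1) i k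
        - of_nat (t+1) * qterm N (2*t) i' k = W k - W (Suc k)"
        using concC[OF Suc True] unfolding W_def by blast
    next
      show "qterm N (2*t+2) i (Suc i') - (of_nat N + of_nat (2*t+2)) * qterm N (2*t+1) i (Suc i') = W (Suc i')"
        using endC[OF True, of N] unfolding W_def Suc by simp
    next
      show "W 0 = 0" unfolding W_def by simp
    qed
    have d1: "i \<le> (2*t+2) div 2" "i' \<le> (2*t) div 2" using True Suc by auto
    have q1: "qc N (2*t+1) i = (\<Sum>k=0..i. qterm N (2*t+1) i k)"
    proof (cases "i \<le> (2*t+1) div 2")
      case True thus ?thesis by (simp add: qc_def)
    next
      case False
      thus ?thesis using qsum_vanish[of "2*t+1" i N] by (simp add: qc_def)
    qed
    show ?thesis using T d1 Suc q1 by (simp add: qc_def)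
  qed
qed

lemma Q_coeff: "coeff (Qpol N m) i = qc N m i"
proof (induction N m arbitrary: i rule: Qpol.induct)
  case (1 N)
  show ?case by (cases i) (simp_all add: qc_def qterm_def)
next
  case (2 N)
  show ?case by (cases i) (simp_all add: qc_def qterm_def FF_def)
next
  case (3 N m)
  have r: "coeff (Qpol N (Suc (Suc m))) i = (of_nat N + of_nat (Suc (Suc m))) * qc N (Suc m) i +
     (if i = 0 then 0 else (if even m then of_nat (Suc (Suc m) div 2) else - (of_nat N + of_nat (Suc (Suc m) div 2))) * qc N m (i - 1))"
    by (simp only: Qpol.simps(3) coeff_rec 3)
  obtain t where "m = 2*t \<or> m = 2*t+1" by (metis oddE evenE)
  thus ?case
  proof
    assume m: "m = 2*t"
    have e: "Suc (Suc m) = 2*t+2" "Suc m = 2*t+1" "Suc (Suc m) div 2 = t+1" using m by auto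
    show ?thesis unfolding r unfolding e using qc_recC[of N t i] m by simp
  next
    assume m: "m = 2*t+1"
    have e: "Suc (Suc m) = 2*t+3" "Suc m = 2*t+2" "Suc (Suc m) div 2 = t+1" using m by auto
    show ?thesis unfolding r unfolding e unfolding m using qc_recD[of N t i] by (simp add: numeral_3_eq_3)
  qed
qed



lemma diff_to_neg: "(a::real) - b*y = a + (-b)*y" by simp

definition pc :: "nat \<Rightarrow> nat \<Rightarrow> nat \<Rightarrow> real" where
  "pc N m i = (-1)^i * of_nat (((m+1) div 2) choose i) * FF N (m-i)"

lemma pc_recC:
  fixes N t i :: nat
  shows "pc N (2*t+2) i = (of_nat N + of_nat (2*t+2)) * pc N (2*t+1) i +
     (if i = 0 then 0 else of_nat (t+1) * pc N (2*t) (i-1))"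
proof (cases i)
  case 0
  have e: "Suc (2*t+1) = 2*t+2" by simp
  have "FF N (2*t+2) = FF N (2*t+1) * (of_nat N + of_nat (2*t+2))"
    using FF_Suc[of N "2*t+1"] unfolding e .
  thus ?thesis using 0 by (simp add: pc_def)
next
  case (Suc i')
  show ?thesis
  proof (cases "i \<le> t+1")
    case False
    have z: "((2*t+2+1) div 2) choose i = 0" "((2*t+1+1) div 2) choose i = 0" "((2*t+1) div 2) choose (i-1) = 0"
      using False Suc by auto
    show ?thesis unfolding pc_def z using Suc by simp
  next
    case True
    define F0 where "F0 = FF N (2*t+1-i)"
    define x where "x = real (2*t+2-i)"
    define C1 where "C1 = real ((t+1) choose i)"
    define C0 where "C0 = real (t choose i')"
    define s where "s = ((-1::real)^i')"
    have e1: "2*t+2-i = Suc (2*t+1-i)" "2*t-i' = 2*t+1-i" using True Suc by auto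
    have F: "FF N (2*t+2-i) = F0*(of_nat N + x)" unfolding F0_def x_def e1(1) FF_Suc by simp
    have n: "Suc i' * ((t+1) choose Suc i') = (t+1) * (t choose i')"
      using Suc_times_binomial[of i' t] by simp
    have n2: "real (Suc i' * ((t+1) choose Suc i')) = real ((t+1) * (t choose i'))"
      using n by (rule arg_cong)
    have e3: "real (t+1) = real t + 1" "real (Suc i') = real i' + 1" by simp_all
    have rel: "(real t+1)*C0 = (real i'+1)*C1"
      using n2 unfolding C0_def C1_def Suc of_nat_mult e3 by (rule sym)
    have xe: "x = 2*real t + 1 - real i'" unfolding x_def using True Suc by auto
    have L: "pc N (2*t+2) i = -s*C1*(F0*(of_nat N + x))"
      unfolding pc_def F unfolding Suc s_def C1_def by simp
    have R1: "pc N (2*t+1) i = -s*C1*F0"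
      unfolding pc_def F0_def unfolding Suc s_def C1_def by simp
    have R2: "pc N (2*t) (i-1) = s*C0*F0"
      unfolding pc_def F0_def using e1(2) unfolding Suc s_def C0_def by simp
    have h1: "-s*C1*(F0*(of_nat N + x)) = (of_nat N + (2*real t+2)) * (-s*C1*F0) + (real t+1)*(s*C0*F0)"
      using rel xe by algebra
    have i0: "i \<noteq> 0" using Suc by simp
    have c: "real (2*t+2) = 2*real t+2" "real (t+1) = real t + 1" by simp_all
    show ?thesis unfolding L R1 R2 if_not_P[OF i0] c by (rule h1)
  qed
qed

lemma pc_recD:
  fixes N t i :: nat
  shows "pc N (2*t+3) i = (of_nat N + of_nat (2*t+3)) * pc N (2*t+2) i +
     (if i = 0 then 0 else (- (of_nat N + of_nat (t+1))) * pc N (2*t+1) (i-1))"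
proof (cases i)
  case 0
  have e: "Suc (2*t+2) = 2*t+3" by simp
  have "FF N (2*t+3) = FF N (2*t+2) * (of_nat N + of_nat (2*t+3))"
    using FF_Suc[of N "2*t+2"] unfolding e .
  thus ?thesis using 0 by (simp add: pc_def)
next
  case (Suc i')
  show ?thesis
  proof (cases "i \<le> t+2")
    case False
    have z: "((2*t+3+1) div 2) choose i = 0" "((2*t+2+1) div 2) choose i = 0" "((2*t+1+1) div 2) choose (i-1) = 0"
      using False Suc by auto
    show ?thesis unfolding pc_def z using Suc by simp
  next
    case True
    define F0 where "F0 = FF N (2*t+2-i)"
    define x where "x = real (2*t+3-i)"
    define C1 where "C1 = real ((t+1) choose i)"
    define C0 where "C0 = real ((t+1) choose i')"
    define s where "s = ((-1::real)^i')"
    have e1: "2*t+3-i = Suc (2*t+2-i)" "2*t+1-i' = 2*t+2-i" using True Suc by auto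
    have F: "FF N (2*t+3-i) = F0*(of_nat N + x)" unfolding F0_def x_def e1(1) FF_Suc by simp
    have g: "real (t+1) * (real (t+1) gchoose i') = real i' * (real (t+1) gchoose i') + real (Suc i') * (real (t+1) gchoose Suc i')"
      by (rule gbinomial_mult_1)
    have e2: "real (t+1) = real t + 1" "real (Suc i') = real i' + 1" by simp_all
    have rel: "(real t+1)*C0 = real i' * C0 + (real i'+1)*C1"
      using g unfolding C0_def C1_def Suc binomial_gbinomial e2 .
    have pas: "real ((t+2) choose i) = C0 + C1" unfolding C0_def C1_def Suc by simp
    have xe: "x = 2*real t + 2 - real i'" unfolding x_def using True Suc by auto
    have L: "pc N (2*t+3) i = -s*(C0+C1)*(F0*(of_nat N + x))"
    proof -
      have "(2*t+3+1) div 2 = t+2" by simp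
      thus ?thesis unfolding pc_def F pas[symmetric] unfolding Suc s_def by simp
    qed
    have R1: "pc N (2*t+2) i = -s*C1*F0"
      unfolding pc_def F0_def unfolding Suc s_def C1_def by simp
    have R2: "pc N (2*t+1) (i-1) = s*C0*F0"
      unfolding pc_def F0_def using e1(2) unfolding Suc s_def C0_def by simp
    have h1: "-s*(C0+C1)*(F0*(of_nat N + x)) = (of_nat N + (2*real t+3)) * (-s*C1*F0) - (of_nat N + (real t+1))*(s*C0*F0)"
      using rel xe by algebra
    have i0: "i \<noteq> 0" using Suc by simp
    have c: "real (2*t+3) = 2*real t+3" "real (t+1) = real t + 1" by simp_all
    show ?thesis unfolding L R1 R2 if_not_P[OF i0] c diff_to_neg[symmetric] by (rule h1)
  qed
qed





lemma P_coeff: "coeff (Ppol N m) i = pc N m i"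
proof (induction N m arbitrary: i rule: Ppol.induct)
  case (1 N)
  show ?case by (cases i) (simp_all add: pc_def)
next
  case (2 N)
  show ?case
  proof (cases i)
    case 0 thus ?thesis by (simp add: pc_def FF_def)
  next
    case (Suc j) thus ?thesis by (cases j) (simp_all add: pc_def)
  qed
next
  case (3 N m)
  have r: "coeff (Ppol N (Suc (Suc m))) i = (of_nat N + of_nat (Suc (Suc m))) * pc N (Suc m) i +
     (if i = 0 then 0 else (if even m then of_nat (Suc (Suc m) div 2) else - (of_nat N + of_nat (Suc (Suc m) div 2))) * pc N m (i - 1))"
    by (simp only: Ppol.simps(3) coeff_rec 3)
  obtain t where "m = 2*t \<or> m = 2*t+1" by (metis oddE evenE)
  thus ?case
  proof
    assume m: "m = 2*t"
    have e: "Suc (Suc m) = 2*t+2" "Suc m = 2*t+1" "Suc (Suc m) div 2 = t+1" using m by auto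
    show ?thesis unfolding r unfolding e using pc_recC[of N t i] m by simp
  next
    assume m: "m = 2*t+1"
    have e: "Suc (Suc m) = 2*t+3" "Suc m = 2*t+2" "Suc (Suc m) div 2 = t+1" using m by auto
    show ?thesis unfolding r unfolding e unfolding m using pc_recD[of N t i] by (simp add: numeral_3_eq_3)
  qed
qed


lemma prod_split:
  assumes "k \<le> M"
  shows "(\<Prod>l=k+1..M. (of_nat N + of_nat l :: real)) = FF N M / FF N k"
proof -
  have "FF N M = FF N k * (\<Prod>l=k+1..M. (of_nat N + of_nat l :: real))"
    using assms
  proof (induction M rule: dec_induct)
    case base thus ?case by simp
  next
    case (step M)
    have "(\<Prod>l=k+1..Suc M. (of_nat N + of_nat l :: real)) = (\<Prod>l=k+1..M. (of_nat N + of_nat l :: real)) * (of_nat N + of_nat (Suc M))"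
      using step.hyps by (simp add: prod.cl_ivl_Suc)
    thus ?case using step.IH by (simp add: FF_Suc)
  qed
  thus ?thesis by simp
qed

lemma coeff_monsum: "coeff (\<Sum>j=a..b. monom (c j) j) i = (if i \<in> {a..b} then c i else 0)"
  by (simp add: coeff_sum)

theorem theorem4:
  fixes N n :: nat
  assumes "N \<ge> 1" and "n \<ge> 1"
  shows
   "Ppol N (2*n - 1) =
      (\<Sum>j=0..n. monom ((-1)^j * of_nat (n choose j)
                    * (\<Prod>l=1..2*n-j-1. (of_nat N + of_nat l))) j)
    \<and> Ppol N (2*n) =
      (\<Sum>j=0..n. monom ((-1)^j * of_nat (n choose j)
                    * (\<Prod>l=1..2*n-j. (of_nat N + of_nat l))) j)
    \<and> Qpol N (2*n - 1) =
      (\<Sum>j=0..n-1. \<Sum>k=0..j. monom ((-1)^(j-k) * falling_fact (of_nat (2*n-j-1)) k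
                    * (of_int (int n - int k - 1) gchoose (j-k))
                    * (\<Prod>l=k+1..2*n-j-1. (of_nat N + of_nat l))) j)
    \<and> Qpol N (2*n) =
      (\<Sum>j=0..n. \<Sum>k=0..j. monom ((-1)^(j-k) * falling_fact (of_nat (2*n-j)) k
                    * (of_int (int n - int k - 1) gchoose (j-k))
                    * (\<Prod>l=k+1..2*n-j. (of_nat N + of_nat l))) j)"

proof -
  have n2: "(2*n-1+1) div 2 = n" "(2*n+1) div 2 = n" "(2*n-1) div 2 = n - 1" "(2*n) div 2 = n"
    using assms(2) by auto
  have A: "Ppol N (2*n - 1) =
      (\<Sum>j=0..n. monom ((-1)^j * of_nat (n choose j)
                    * (\<Prod>l=1..2*n-j-1. (of_nat N + of_nat l))) j)"
  proof (rule poly_eqI)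
    fix i
    show "coeff (Ppol N (2*n - 1)) i = coeff (\<Sum>j=0..n. monom ((-1)^j * of_nat (n choose j)
                    * (\<Prod>l=1..2*n-j-1. (of_nat N + of_nat l))) j) i"
      unfolding P_coeff coeff_monsum pc_def n2 FF_def by (auto simp: diff_commute)
  qed
  have B: "Ppol N (2*n) =
      (\<Sum>j=0..n. monom ((-1)^j * of_nat (n choose j)
                    * (\<Prod>l=1..2*n-j. (of_nat N + of_nat l))) j)"
  proof (rule poly_eqI)
    fix i
    show "coeff (Ppol N (2*n)) i = coeff (\<Sum>j=0..n. monom ((-1)^j * of_nat (n choose j)
                    * (\<Prod>l=1..2*n-j. (of_nat N + of_nat l))) j) i"
      unfolding P_coeff coeff_monsum pc_def n2 FF_def by auto
  qed
  have C: "Qpol N (2*n - 1) =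
      (\<Sum>j=0..n-1. \<Sum>k=0..j. monom ((-1)^(j-k) * falling_fact (of_nat (2*n-j-1)) k
                    * (of_int (int n - int k - 1) gchoose (j-k))
                    * (\<Prod>l=k+1..2*n-j-1. (of_nat N + of_nat l))) j)"
  proof (rule poly_eqI)
    fix i
    have "coeff (\<Sum>j=0..n-1. \<Sum>k=0..j. monom ((-1)^(j-k) * falling_fact (of_nat (2*n-j-1)) k
                    * (of_int (int n - int k - 1) gchoose (j-k))
                    * (\<Prod>l=k+1..2*n-j-1. (of_nat N + of_nat l))) j) i
      = (if i \<in> {0..n-1} then (\<Sum>k=0..i. (-1)^(i-k) * falling_fact (of_nat (2*n-i-1)) k
                    * (of_int (int n - int k - 1) gchoose (i-k))
                    * (\<Prod>l=k+1..2*n-i-1. (of_nat N + of_nat l))) else 0)"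
      unfolding monom_sum[symmetric] coeff_monsum ..
    also have "\<dots> = qc N (2*n-1) i"
    proof (cases "i \<le> n - 1")
      case True
      have "(\<Sum>k=0..i. (-1)^(i-k) * falling_fact (of_nat (2*n-i-1)) k
                    * (of_int (int n - int k - 1) gchoose (i-k))
                    * (\<Prod>l=k+1..2*n-i-1. (of_nat N + of_nat l))) = (\<Sum>k=0..i. qterm N (2*n-1) i k)"
      proof (rule sum.cong)
        fix k assume "k \<in> {0..i}"
        hence "k \<le> 2*n-i-1" using True by auto
        thus "(-1)^(i-k) * falling_fact (of_nat (2*n-i-1)) k
                    * (of_int (int n - int k - 1) gchoose (i-k))
                    * (\<Prod>l=k+1..2*n-i-1. (of_nat N + of_nat l)) = qterm N (2*n-1) i k"
          unfolding qterm_def n2 prod_split[OF \<open>k \<le> 2*n-i-1\<close>] by (simp add: diff_commute)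
      qed simp
      thus ?thesis using True unfolding qc_def n2 by simp
    next
      case False thus ?thesis unfolding qc_def n2 by simp
    qed
    finally show "coeff (Qpol N (2*n - 1)) i = coeff (\<Sum>j=0..n-1. \<Sum>k=0..j. monom ((-1)^(j-k) * falling_fact (of_nat (2*n-j-1)) k
                    * (of_int (int n - int k - 1) gchoose (j-k))
                    * (\<Prod>l=k+1..2*n-j-1. (of_nat N + of_nat l))) j) i"
      unfolding Q_coeff by simp
  qed
  have D: "Qpol N (2*n) =
      (\<Sum>j=0..n. \<Sum>k=0..j. monom ((-1)^(j-k) * falling_fact (of_nat (2*n-j)) k
                    * (of_int (int n - int k - 1) gchoose (j-k))
                    * (\<Prod>l=k+1..2*n-j. (of_nat N + of_nat l))) j)"
  proof (rule poly_eqI)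
    fix i
    have "coeff (\<Sum>j=0..n. \<Sum>k=0..j. monom ((-1)^(j-k) * falling_fact (of_nat (2*n-j)) k
                    * (of_int (int n - int k - 1) gchoose (j-k))
                    * (\<Prod>l=k+1..2*n-j. (of_nat N + of_nat l))) j) i
      = (if i \<in> {0..n} then (\<Sum>k=0..i. (-1)^(i-k) * falling_fact (of_nat (2*n-i)) k
                    * (of_int (int n - int k - 1) gchoose (i-k))
                    * (\<Prod>l=k+1..2*n-i. (of_nat N + of_nat l))) else 0)"
      unfolding monom_sum[symmetric] coeff_monsum ..
    also have "\<dots> = qc N (2*n) i"
    proof (cases "i \<le> n")
      case True
      have "(\<Sum>k=0..i. (-1)^(i-k) * falling_fact (of_nat (2*n-i)) k
                    * (of_int (int n - int k - 1) gchoose (i-k))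
                    * (\<Prod>l=k+1..2*n-i. (of_nat N + of_nat l))) = (\<Sum>k=0..i. qterm N (2*n) i k)"
      proof (rule sum.cong)
        fix k assume "k \<in> {0..i}"
        hence "k \<le> 2*n-i" using True by auto
        thus "(-1)^(i-k) * falling_fact (of_nat (2*n-i)) k
                    * (of_int (int n - int k - 1) gchoose (i-k))
                    * (\<Prod>l=k+1..2*n-i. (of_nat N + of_nat l)) = qterm N (2*n) i k"
          unfolding qterm_def n2 prod_split[OF \<open>k \<le> 2*n-i\<close>] by simp
      qed simp
      thus ?thesis using True unfolding qc_def n2 by simp
    next
      case False thus ?thesis unfolding qc_def n2 by simp
    qed
    finally show "coeff (Qpol N (2*n)) i = coeff (\<Sum>j=0..n. \<Sum>k=0..j. monom ((-1)^(j-k) * falling_fact (of_nat (2*n-j)) k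
                    * (of_int (int n - int k - 1) gchoose (j-k))
                    * (\<Prod>l=k+1..2*n-j. (of_nat N + of_nat l))) j) i"
      unfolding Q_coeff by simp
  qed
  show ?thesis using A B C D by blast
qed


end
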